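(* Let $\mathcal{R}$ be a finite set of axis-parallel rectangles in the plane. Then the piercing graph $H$ of $\mathcal{R}$ is a comparability graph.
   Context: The piercing graph $H=(\mathcal{R},E)$ has an edge $\{R_1,R_2\}$ iff $R_1$ and $R_2$ pierce, i.e., they intersect but neither contains a corner of the other. A graph on vertex set $V$ is a comparability graph if it is obtained from (the transitive closure of) a partial order on $V$ by joining every pair of comparable elements and forgetting directions. *)

theory Defs
  imports Complex_Main
begin

definition rect :: "real \<Rightarrow> real \<Rightarrow> real \<Rightarrow> real \<Rightarrow> (real \<times> real) set" where
  "rect a b c d = {a..b} \<times> {c..d}"

definition is_rect :: "(real \<times> real) set \<Rightarrow> bool" where
  "is_rect S \<longleftrightarrow> (\<exists>a b c d. a < b \<and> c < d \<and> S = rect a b c d)"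

definition corners :: "(real \<times> real) set \<Rightarrow> (real \<times> real) set" where
  "corners S = {(x, y). \<exists>a b c d. a < b \<and> c < d \<and> S = rect a b c d \<and> x \<in> {a, b} \<and> y \<in> {c, d}}"

definition pierce :: "(real \<times> real) set \<Rightarrow> (real \<times> real) set \<Rightarrow> bool" where
  "pierce R1 R2 \<longleftrightarrow> R1 \<inter> R2 \<noteq> {} \<and> corners R1 \<inter> R2 = {} \<and> corners R2 \<inter> R1 = {}"

definition piercing_edge :: "(real \<times> real) set set \<Rightarrow> (real \<times> real) set \<Rightarrow> (real \<times> real) set \<Rightarrow> bool" where
  "piercing_edge \<R> R1 R2 \<longleftrightarrow> R1 \<in> \<R> \<and> R2 \<in> \<R> \<and> R1 \<noteq> R2 \<and> pierce R1 R2"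

definition comparability_graph :: "'a set \<Rightarrow> ('a \<Rightarrow> 'a \<Rightarrow> bool) \<Rightarrow> bool" where
  "comparability_graph V E \<longleftrightarrow>
     (\<exists>P :: 'a \<Rightarrow> 'a \<Rightarrow> bool.
        (\<forall>x\<in>V. \<not> P x x) \<and>
        (\<forall>x\<in>V. \<forall>y\<in>V. \<forall>z\<in>V. P x y \<longrightarrow> P y z \<longrightarrow> P x z) \<and>
        (\<forall>x\<in>V. \<forall>y\<in>V. x \<noteq> y \<longrightarrow> (E x y \<longleftrightarrow> P x y \<or> P y x)))"

end

theory Submission
  imports Defs
begin

lemma rect_inj:
  assumes "a < b" "c < d" "a' < b'" "c' < d'" "rect a b c d = rect a' b' c' d'"
  shows "a = a' \<and> b = b' \<and> c = c' \<and> d = d'"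
proof -
  have "{a..b} = {a'..b'} \<and> {c..d} = {c'..d'}"
    using assms by (auto simp: rect_def times_eq_iff)
  then show ?thesis using assms by simp
qed

lemma corners_rect:
  assumes "a < b" "c < d"
  shows "corners (rect a b c d) = {a,b} \<times> {c,d}"
proof -
  have "\<And>a' b' c' d'. a' < b' \<Longrightarrow> c' < d' \<Longrightarrow> rect a b c d = rect a' b' c' d' \<Longrightarrow>
     a = a' \<and> b = b' \<and> c = c' \<and> d = d'"
    using rect_inj assms by blast
  then show ?thesis unfolding corners_def using assms by blast
qed

lemma pierce_rect:
  assumes "a < b" "c < d" "a' < b'" "c' < d'"
  shows "pierce (rect a b c d) (rect a' b' c' d') \<longleftrightarrow>
    (a < a' \<and> b' < b \<and> c' < c \<and> d < d') \<or> (a' < a \<and> b < b' \<and> c < c' \<and> d' < d)"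
proof -
  have h1: "corners (rect a b c d) \<inter> rect a' b' c' d' = {} \<longleftrightarrow>
     \<not>((a'\<le>a \<and> a\<le>b' \<or> a'\<le>b \<and> b\<le>b') \<and> (c'\<le>c \<and> c\<le>d' \<or> c'\<le>d \<and> d\<le>d'))"
    unfolding corners_rect[OF assms(1,2)] unfolding rect_def by auto
  have h2: "corners (rect a' b' c' d') \<inter> rect a b c d = {} \<longleftrightarrow>
     \<not>((a\<le>a' \<and> a'\<le>b \<or> a\<le>b' \<and> b'\<le>b) \<and> (c\<le>c' \<and> c'\<le>d \<or> c\<le>d' \<and> d'\<le>d))"
    unfolding corners_rect[OF assms(3,4)] unfolding rect_def by auto
  have h3: "rect a b c d \<inter> rect a' b' c' d' \<noteq> {} \<longleftrightarrow> a\<le>b' \<and> a'\<le>b \<and> c\<le>d' \<and> c'\<le>d"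
    using assms unfolding rect_def by (auto simp: Times_Int_Times)
  show ?thesis unfolding pierce_def h1 h2 h3 using assms by argo
qed

definition Prel :: "(real \<times> real) set \<Rightarrow> (real \<times> real) set \<Rightarrow> bool" where
  "Prel R1 R2 = (\<exists>a b c d a' b' c' d'. a < b \<and> c < d \<and> a' < b' \<and> c' < d' \<and>
     R1 = rect a b c d \<and> R2 = rect a' b' c' d' \<and> a < a' \<and> b' < b \<and> c' < c \<and> d < d')"

lemma PrelI:
  "a < b \<Longrightarrow> c < d \<Longrightarrow> a' < b' \<Longrightarrow> c' < d' \<Longrightarrow> R1 = rect a b c d \<Longrightarrow> R2 = rect a' b' c' d'
   \<Longrightarrow> a < a' \<Longrightarrow> b' < b \<Longrightarrow> c' < c \<Longrightarrow> d < d' \<Longrightarrow> Prel R1 R2"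
  unfolding Prel_def
  apply (rule exI[of _ a], rule exI[of _ b], rule exI[of _ c], rule exI[of _ d])
  apply (rule exI[of _ a'], rule exI[of _ b'], rule exI[of _ c'], rule exI[of _ d'])
  by simp

theorem theorem2:
  fixes \<R> :: "(real \<times> real) set set"
  assumes "finite \<R>"
    and "\<forall>R\<in>\<R>. is_rect R"
  shows "comparability_graph \<R> (piercing_edge \<R>)"
proof -
  define P where "P = Prel"
  have irr: "\<not> P x x" for x
  proof
    assume "P x x"
    then obtain a b c d a' b' c' d' where h: "a < b" "c < d" "a' < b'" "c' < d'"
      "x = rect a b c d" "x = rect a' b' c' d'" "a < a'" unfolding P_def Prel_def by (elim exE conjE) blast
    have "rect a b c d = rect a' b' c' d'" using h(5,6) by simp
    then show False using rect_inj[OF h(1-4)] h(7) by simp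
  qed
  have tr: "P x z" if xy: "P x y" and yz: "P y z" for x y z
  proof -
    obtain a b c d a' b' c' d' where h: "a < b" "c < d" "a' < b'" "c' < d'"
      "x = rect a b c d" "y = rect a' b' c' d'" "a < a'" "b' < b" "c' < c" "d < d'"
      using xy unfolding P_def Prel_def by (elim exE conjE) blast
    obtain a2 b2 c2 d2 a3 b3 c3 d3 where g: "a2 < b2" "c2 < d2" "a3 < b3" "c3 < d3"
      "y = rect a2 b2 c2 d2" "z = rect a3 b3 c3 d3" "a2 < a3" "b3 < b2" "c3 < c2" "d2 < d3"
      using yz unfolding P_def Prel_def by (elim exE conjE) blast
    have "a' = a2 \<and> b' = b2 \<and> c' = c2 \<and> d' = d2"
      using rect_inj[OF h(3,4) g(1,2)] h(6) g(5) by simp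
    then have "a < a3" "b3 < b" "c3 < c" "d < d3" using h(7-10) g(7-10) by linarith+
    then show ?thesis unfolding P_def using PrelI[OF h(1,2) g(3,4) h(5) g(6)] by blast
  qed
  have ed: "piercing_edge \<R> x y \<longleftrightarrow> P x y \<or> P y x" if xR: "x \<in> \<R>" and yR: "y \<in> \<R>" and xy: "x \<noteq> y" for x y
  proof -
    obtain a b c d where h: "a < b" "c < d" "x = rect a b c d"
      using assms(2) xR unfolding is_rect_def by meson
    obtain a' b' c' d' where g: "a' < b'" "c' < d'" "y = rect a' b' c' d'"
      using assms(2) yR unfolding is_rect_def by meson
    have px: "P x y \<longleftrightarrow> (a < a' \<and> b' < b \<and> c' < c \<and> d < d')"
    proof
      assume "P x y"
      then obtain a1 b1 c1 d1 a2 b2 c2 d2 where k: "a1 < b1" "c1 < d1" "a2 < b2" "c2 < d2"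
        "x = rect a1 b1 c1 d1" "y = rect a2 b2 c2 d2" "a1 < a2" "b2 < b1" "c2 < c1" "d1 < d2"
        unfolding P_def Prel_def by (elim exE conjE) blast
      have "a = a1 \<and> b = b1 \<and> c = c1 \<and> d = d1" using rect_inj[OF h(1,2) k(1,2)] h(3) k(5) by simp
      moreover have "a' = a2 \<and> b' = b2 \<and> c' = c2 \<and> d' = d2" using rect_inj[OF g(1,2) k(3,4)] g(3) k(6) by simp
      ultimately show "a < a' \<and> b' < b \<and> c' < c \<and> d < d'" using k(7-10) by simp
    next
      assume "a < a' \<and> b' < b \<and> c' < c \<and> d < d'"
      then show "P x y" unfolding P_def using PrelI[OF h(1,2) g(1,2) h(3) g(3)] by blast
    qed
    have py: "P y x \<longleftrightarrow> (a' < a \<and> b < b' \<and> c < c' \<and> d' < d)"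
    proof
      assume "P y x"
      then obtain a1 b1 c1 d1 a2 b2 c2 d2 where k: "a1 < b1" "c1 < d1" "a2 < b2" "c2 < d2"
        "y = rect a1 b1 c1 d1" "x = rect a2 b2 c2 d2" "a1 < a2" "b2 < b1" "c2 < c1" "d1 < d2"
        unfolding P_def Prel_def by (elim exE conjE) blast
      have "a' = a1 \<and> b' = b1 \<and> c' = c1 \<and> d' = d1" using rect_inj[OF g(1,2) k(1,2)] g(3) k(5) by simp
      moreover have "a = a2 \<and> b = b2 \<and> c = c2 \<and> d = d2" using rect_inj[OF h(1,2) k(3,4)] h(3) k(6) by simp
      ultimately show "a' < a \<and> b < b' \<and> c < c' \<and> d' < d" using k(7-10) by simp
    next
      assume "a' < a \<and> b < b' \<and> c < c' \<and> d' < d"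
      then show "P y x" unfolding P_def using PrelI[OF g(1,2) h(1,2) g(3) h(3)] by blast
    qed
    have pp: "pierce x y \<longleftrightarrow> (a < a' \<and> b' < b \<and> c' < c \<and> d < d') \<or> (a' < a \<and> b < b' \<and> c < c' \<and> d' < d)"
      using pierce_rect[OF h(1,2) g(1,2)] h(3) g(3) by simp
    show ?thesis unfolding piercing_edge_def px py pp using xR yR xy by blast
  qed
  show ?thesis unfolding comparability_graph_def
  proof (rule exI[of _ P], intro conjI ballI impI)
    show "\<not> P x x" for x by (rule irr)
    show "P x z" if "P x y" "P y z" for x y z by (rule tr[OF that])
    show "piercing_edge \<R> x y = (P x y \<or> P y x)" if "x \<in> \<R>" "y \<in> \<R>" "x \<noteq> y" for x y by (rule ed[OF that])
  qed
qed

end
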